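(* Let $P>0$, $\zeta\in\mathbb{R}$, and let $q=(q_1,q_2)^\intercal:\mathbb{R}\to\mathbb{C}^2$ be smooth and $P$-periodic. Define $\alpha=-i\zeta$, $\beta=q$, $\gamma=-\overline q$, $\rho=i\zeta I_2$, and $$A=-2i\zeta^2+iq^\intercal\overline q,\quad B=2\zeta q+iq_x,\quad C=-2\zeta\overline q+i\overline q_x,\quad D=2i\zeta^2I_2-i\overline q\,q^\intercal,$$ $X=\begin{pmatrix}\alpha&\beta^\intercal\\ \gamma&\rho\end{pmatrix}$, $T=\begin{pmatrix}A&B^\intercal\\ C&D\end{pmatrix}$ (both $3\times3$), and assume $T_x=XT-TX$ for all $x$. Then $T(x)$ is skew-Hermitian, so every eigenvalue $\Omega$ of $T$ is purely imaginary; and if $\Omega$ is an $x$-independent eigenvalue of $T$ with $\det(D(x)-\Omega I_2)\neq0$ for all $x$, then $$\mathrm{Re}\int_0^P\beta^\intercal(D-\Omega I_2)^{-1}C\,dx=0 .$$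
   Context: This is the Lax pair $v_x=Xv$, $v_t=Tv$ of the Manakov system (two-component vector NLS) $iq_{j,t}+q_{j,xx}+2(|q_1|^2+|q_2|^2)q_j=0$, $j=1,2$, for a stationary potential; the hypothesis $T_x=[X,T]$ is the compatibility condition. $I_2$ is the $2\times2$ identity, overline is complex conjugation, ${}^\intercal$ is transpose. The displayed vanishing is the condition that the eigenfunction $v=e^{\Omega t}y_1(x)\,(a,-(D-\Omega I_2)^{-1}Ca)^\intercal$, $y_1'=(\alpha-\beta^\intercal(D-\Omega I_2)^{-1}C)y_1$, is bounded in $x$. *)

theory Defs
  imports "HOL-Analysis.Analysis"
begin

definition smooth_fun :: "(real \<Rightarrow> 'a::real_normed_vector) \<Rightarrow> bool" where
  "smooth_fun f \<longleftrightarrow> (\<exists>d :: nat \<Rightarrow> real \<Rightarrow> 'a. d 0 = f \<and>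
      (\<forall>n x. (d n has_vector_derivative d (Suc n) x) (at x)))"

definition vconj :: "complex ^ 'n \<Rightarrow> complex ^ 'n" where
  "vconj v = (\<chi> i. cnj (v $ i))"

definition adjoint_mat :: "complex ^ 'n ^ 'm \<Rightarrow> complex ^ 'm ^ 'n" where
  "adjoint_mat M = (\<chi> i j. cnj (M $ j $ i))"

definition skew_hermitian :: "complex ^ 'n ^ 'n \<Rightarrow> bool" where
  "skew_hermitian M \<longleftrightarrow> adjoint_mat M = - M"

definition is_eigenvalue :: "complex ^ 'n ^ 'n \<Rightarrow> complex \<Rightarrow> bool" where
  "is_eigenvalue M \<Omega> \<longleftrightarrow> (\<exists>v. v \<noteq> 0 \<and> M *v v = \<Omega> *s v)"

text \<open>Index embedding of the lower 2x2 block into the 3x3 matrix: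
  3x3 indices 1,2,3 (of type 3); index 1 is the scalar block, indices 2,3 correspond
  to indices 1,2 of type 2.\<close>
definition sub3 :: "3 \<Rightarrow> 2" where
  "sub3 j = (if j = 2 then 1 else 2)"

definition blockmat :: "complex \<Rightarrow> complex ^ 2 \<Rightarrow> complex ^ 2 \<Rightarrow> complex ^ 2 ^ 2 \<Rightarrow> complex ^ 3 ^ 3" where
  "blockmat a b c d = (\<chi> i j. if i = 1 then (if j = 1 then a else b $ sub3 j)
                               else (if j = 1 then c $ sub3 i else d $ sub3 i $ sub3 j))"

definition outer :: "complex ^ 'n \<Rightarrow> complex ^ 'm \<Rightarrow> complex ^ 'm ^ 'n" where
  "outer u v = (\<chi> i j. u $ i * v $ j)"

end

theory Submission
  imports Defs
begin


lemma blockmat_mulv: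
  "(blockmat a b c d *v v) $ i = (if i = 1 then a * v$1 + b$1 * v$2 + b$2 * v$3
      else c $ sub3 i * v$1 + d$(sub3 i)$1 * v$2 + d$(sub3 i)$2 * v$3)"
  by (simp add: matrix_vector_mult_def sum_3 blockmat_def sub3_def)

lemma blockmat_skew:
  assumes "cnj a = - a" "c = - vconj b" "adjoint_mat d = - d"
  shows "skew_hermitian (blockmat a b c d)"
proof -
  have d: "\<And>i j. cnj (d $ j $ i) = - d $ i $ j" using assms(3)
    by (simp add: adjoint_mat_def vec_eq_iff)
  show ?thesis
    unfolding skew_hermitian_def vec_eq_iff adjoint_mat_def forall_3
    using assms(1) d by (simp add: blockmat_def sub3_def assms(2) vconj_def)
qed

lemma quad_skew:
  fixes M :: "complex^'n^'n"
  assumes "skew_hermitian M"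
  shows "Re (\<Sum>i\<in>UNIV. cnj (v$i) * (M *v v)$i) = 0"
proof -
  have d: "\<And>i j. cnj (M $ j $ i) = - M $ i $ j" using assms
    by (simp add: skew_hermitian_def adjoint_mat_def vec_eq_iff)
  define s where "s = (\<Sum>i\<in>UNIV. cnj (v$i) * (M *v v)$i)"
  have "cnj s = (\<Sum>i\<in>UNIV. \<Sum>j\<in>UNIV. v$i * cnj (M$i$j) * cnj (v$j))"
    by (simp add: s_def matrix_vector_mult_def sum_distrib_left mult.assoc)
  also have "\<dots> = (\<Sum>i\<in>UNIV. \<Sum>j\<in>UNIV. - (cnj (v$j) * M$j$i * v$i))"
    by (simp add: d mult.commute mult.left_commute)
  also have "\<dots> = - s"
    by (subst sum.swap) (simp add: s_def matrix_vector_mult_def sum_distrib_left sum_negf mult.assoc)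
  finally have "cnj s = - s" .
  then have "Re s = - Re s" by (metis cnj.sel(1) uminus_complex.sel(1))
  then show ?thesis unfolding s_def by simp
qed

lemma eig_imag:
  fixes M :: "complex^'n^'n"
  assumes "skew_hermitian M" "M *v v = \<Omega> *s v" "v \<noteq> 0"
  shows "Re \<Omega> = 0"
proof -
  have "Re (\<Sum>i\<in>UNIV. cnj (v$i) * (M *v v)$i) = 0" by (rule quad_skew[OF assms(1)])
  also have "(\<Sum>i\<in>UNIV. cnj (v$i) * (M *v v)$i) = \<Omega> * of_real (\<Sum>i\<in>UNIV. (cmod (v$i))^2)"
    by (simp add: assms(2) sum_distrib_left complex_norm_square mult.commute mult.left_commute del: of_real_power)
  finally have "Re \<Omega> * (\<Sum>i\<in>UNIV. (cmod (v$i))^2) = 0" by simp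
  moreover have "(\<Sum>i\<in>UNIV. (cmod (v$i))^2) > 0"
  proof -
    obtain i where "v $ i \<noteq> 0" using assms(3) by (auto simp: vec_eq_iff)
    then have "(cmod (v$i))^2 > 0" by simp
    moreover have "(cmod (v$i))^2 \<le> (\<Sum>i\<in>UNIV. (cmod (v$i))^2)"
      by (rule member_le_sum) auto
    ultimately show ?thesis by linarith
  qed
  ultimately show ?thesis by simp
qed

lemma matrix_inv_props:
  assumes "invertible (A::'a::semiring_1^'n^'m)"
  shows "A ** matrix_inv A = mat 1 \<and> matrix_inv A ** A = mat 1"
  using assms unfolding invertible_def matrix_inv_def by (rule someI_ex)

lemma solve_inv:
  fixes m :: "'a::field^'n^'n"
  assumes "det m \<noteq> 0" "m *v z = y"
  shows "matrix_inv m *v y = z"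
proof -
  have "invertible m" using assms(1) by (simp add: invertible_det_nz)
  then have "matrix_inv m ** m = mat 1" using matrix_inv_props by blast
  then show ?thesis using assms(2) by (metis matrix_vector_mul_assoc matrix_vector_mul_lid)
qed

lemma mulv_smult: "(A::'a::comm_ring_1^'n^'m) *v (k *s v) = k *s (A *v v)"
  by (simp add: vec_eq_iff matrix_vector_mult_def sum_distrib_left mult.left_commute)

lemma cramer2:
  fixes m :: "complex^2^2"
  assumes "det m \<noteq> 0"
  shows "(matrix_inv m *v c) $ 1 = (m$2$2 * c$1 - m$1$2 * c$2) / det m"
    "(matrix_inv m *v c) $ 2 = (m$1$1 * c$2 - m$2$1 * c$1) / det m"
proof -
  define z where "z = (\<chi> i::2. if i = 1 then (m$2$2 * c$1 - m$1$2 * c$2) / det m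
                                else (m$1$1 * c$2 - m$2$1 * c$1) / det m)"
  have "m *v z = c"
    using assms unfolding vec_eq_iff forall_2
    by (simp add: z_def matrix_vector_mult_def sum_2 field_simps) (simp add: det_2 algebra_simps)
  then have "matrix_inv m *v c = z" using solve_inv assms by blast
  then show "(matrix_inv m *v c) $ 1 = (m$2$2 * c$1 - m$1$2 * c$2) / det m"
    "(matrix_inv m *v c) $ 2 = (m$1$1 * c$2 - m$2$1 * c$1) / det m"
    by (simp_all add: z_def)
qed

lemma kernel:
  assumes "det (d - mat \<Omega>) \<noteq> 0" "blockmat a b c d *v v = \<Omega> *s v"
  shows "v = (v$1) *s (\<chi> i. if i = 1 then 1 else - (matrix_inv (d - mat \<Omega>) *v c) $ sub3 i)"
proof -
  define vl where "vl = (\<chi> j::2. if j = 1 then v$2 else v$3)"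
  have e2: "(blockmat a b c d *v v) $ 2 = \<Omega> * v$2" and e3: "(blockmat a b c d *v v) $ 3 = \<Omega> * v$3"
    using assms(2) by simp_all
  have "(d - mat \<Omega>) *v vl = (- v$1) *s c"
    using e2 e3 unfolding vec_eq_iff forall_2 blockmat_mulv
    by (simp add: matrix_vector_mult_def sum_2 vl_def mat_def sub3_def algebra_simps)
  then have "matrix_inv (d - mat \<Omega>) *v ((- v$1) *s c) = vl" using solve_inv assms(1) by blast
  then have "vl = (- v$1) *s (matrix_inv (d - mat \<Omega>) *v c)" by (simp only: mulv_smult)
  then have "v$2 = - v$1 * (matrix_inv (d - mat \<Omega>) *v c)$1" "v$3 = - v$1 * (matrix_inv (d - mat \<Omega>) *v c)$2"
    unfolding vl_def vec_eq_iff forall_2 by simp_all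
  then show ?thesis unfolding vec_eq_iff forall_3 by (simp add: sub3_def)
qed



theorem mainTheorem5:
  fixes P \<zeta> :: real and q qx :: "real \<Rightarrow> complex ^ 2"
    and X T :: "real \<Rightarrow> complex ^ 3 ^ 3" and D :: "real \<Rightarrow> complex ^ 2 ^ 2"
    and C :: "real \<Rightarrow> complex ^ 2"
  assumes P_pos: "P > 0"
    and q_smooth: "smooth_fun q"
    and q_periodic: "\<And>x. q (x + P) = q x"
    and qx_def: "\<And>x. (q has_vector_derivative qx x) (at x)"
    and C_def: "C = (\<lambda>x. (- 2 * complex_of_real \<zeta>) *s vconj (q x) + \<i> *s vconj (qx x))"
    and D_def: "D = (\<lambda>x. mat (2 * \<i> * complex_of_real \<zeta> ^ 2) - outer (\<i> *s vconj (q x)) (q x))"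
    and X_def: "X = (\<lambda>x. blockmat (- \<i> * complex_of_real \<zeta>) (q x) (- vconj (q x))
                          (mat (\<i> * complex_of_real \<zeta>)))"
    and T_def: "T = (\<lambda>x. blockmat (- 2 * \<i> * complex_of_real \<zeta> ^ 2 + \<i> * (\<Sum>j\<in>UNIV. q x $ j * cnj (q x $ j)))
                          ((2 * complex_of_real \<zeta>) *s q x + \<i> *s qx x) (C x) (D x))"
    and lax: "\<And>x. (T has_vector_derivative (X x ** T x - T x ** X x)) (at x)"
  shows "(\<forall>x. skew_hermitian (T x))
       \<and> (\<forall>x \<Omega>. is_eigenvalue (T x) \<Omega> \<longrightarrow> Re \<Omega> = 0)
       \<and> (\<forall>\<Omega>. (\<forall>x. is_eigenvalue (T x) \<Omega>) \<longrightarrow> (\<forall>x. det (D x - mat \<Omega>) \<noteq> 0) \<longrightarrow>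
            Re (integral {0..P} (\<lambda>x. \<Sum>j\<in>UNIV. q x $ j * (matrix_inv (D x - mat \<Omega>) *v C x) $ j)) = 0)"
proof -
  have skT: "skew_hermitian (T x)" for x
    unfolding T_def
  proof (rule blockmat_skew)
    show "cnj (- 2 * \<i> * complex_of_real \<zeta> ^ 2 + \<i> * (\<Sum>j\<in>UNIV. q x $ j * cnj (q x $ j))) =
      - (- 2 * \<i> * complex_of_real \<zeta> ^ 2 + \<i> * (\<Sum>j\<in>UNIV. q x $ j * cnj (q x $ j)))"
      by (simp add: sum_2 mult.commute)
    show "C x = - vconj (2 * complex_of_real \<zeta> *s q x + \<i> *s qx x)"
      by (simp add: C_def vconj_def vec_eq_iff)
    show "adjoint_mat (D x) = - D x"
      by (simp add: D_def adjoint_mat_def mat_def outer_def vconj_def vec_eq_iff forall_2)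
  qed
  have skX: "skew_hermitian (X x)" for x
    unfolding X_def
    by (rule blockmat_skew) (simp_all add: adjoint_mat_def mat_def vec_eq_iff)
  have part2: "\<forall>x \<Omega>. is_eigenvalue (T x) \<Omega> \<longrightarrow> Re \<Omega> = 0"
    using eig_imag[OF skT] unfolding is_eigenvalue_def by blast
  have part3: "Re (integral {0..P} (\<lambda>x. \<Sum>j\<in>UNIV. q x $ j * (matrix_inv (D x - mat \<Omega>) *v C x) $ j)) = 0"
    if eig: "\<forall>x. is_eigenvalue (T x) \<Omega>" and nd: "\<forall>x. det (D x - mat \<Omega>) \<noteq> 0" for \<Omega>
  proof -
    define M where "M x = D x - mat \<Omega>" for x
    define W where "W x = matrix_inv (M x) *v C x" for x
    define U where "U x = (\<chi> i::3. if i = 1 then 1 else - W x $ sub3 i)" for x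
    define f where "f x = (\<Sum>j\<in>UNIV. q x $ j * W x $ j)" for x
    have ndM: "det (M x) \<noteq> 0" for x using nd M_def by simp
    have kerT: "v = v$1 *s U x" if "T x *v v = \<Omega> *s v" for x v
      unfolding U_def W_def M_def
      by (rule kernel[OF nd[rule_format]]) (use that in \<open>simp add: T_def\<close>)
    have TU: "T x *v U x = \<Omega> *s U x" for x
    proof -
      obtain v where v: "v \<noteq> 0" "T x *v v = \<Omega> *s v" using eig is_eigenvalue_def by blast
      have vU: "v = v$1 *s U x" by (rule kerT[OF v(2)])
      have v1: "v$1 \<noteq> 0" using v(1) vU by (metis vector_smult_lzero)
      have "v$1 *s (T x *v U x) = v$1 *s (\<Omega> *s U x)"
        using v(2) vU by (metis mulv_smult vector_smult_assoc mult.commute)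
      then show ?thesis using v1 by (simp add: vec_eq_iff)
    qed
    obtain d where d0: "d 0 = q" and dd: "\<And>n x. (d n has_vector_derivative d (Suc n) x) (at x)"
      using q_smooth unfolding smooth_fun_def by blast
    have qx_eq: "qx = d 1"
    proof
      fix x show "qx x = d 1 x" using vector_derivative_unique_at[OF qx_def[of x], of "d 1 x"] dd[of 0 x] d0 by simp
    qed
    have qxd: "(qx has_vector_derivative d 2 x) (at x)" for x
      using dd[of 1 x] qx_eq by (simp add: numeral_2_eq_2)
    have bl2: "bounded_linear (\<lambda>v::complex^2. v $ k)" for k by (rule bounded_linear_vec_nth)
    have dq: "(\<lambda>y. q y $ k) differentiable (at x)" for k x
      by (rule differentiableI_vector, rule bounded_linear.has_vector_derivative[OF bl2 qx_def])
    have dqx: "(\<lambda>y. qx y $ k) differentiable (at x)" for k x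
      by (rule differentiableI_vector, rule bounded_linear.has_vector_derivative[OF bl2 qxd])
    have dcq: "(\<lambda>y. cnj (q y $ k)) differentiable (at x)" for k x
      by (rule differentiableI_vector, rule bounded_linear.has_vector_derivative[OF bounded_linear_cnj],
          rule bounded_linear.has_vector_derivative[OF bl2 qx_def])
    have dcqx: "(\<lambda>y. cnj (qx y $ k)) differentiable (at x)" for k x
      by (rule differentiableI_vector, rule bounded_linear.has_vector_derivative[OF bounded_linear_cnj],
          rule bounded_linear.has_vector_derivative[OF bl2 qxd])
    have dM: "(\<lambda>y. M y $ i $ j) differentiable (at x)" for i j x
      unfolding M_def D_def by (simp add: mat_def outer_def vconj_def) (auto intro!: derivative_intros dq dcq)
    have dC: "(\<lambda>y. C y $ i) differentiable (at x)" for i x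
      unfolding C_def by (simp add: vconj_def) (intro derivative_intros dcq dcqx)
    have ddet: "(\<lambda>y. det (M y)) differentiable (at x)" for x
      unfolding det_2 by (intro derivative_intros dM)
    have dW: "(\<lambda>y. W y $ k) differentiable (at x)" for k x
    proof -
      have "k = 1 \<or> k = 2" by (rule exhaust_2)
      then show ?thesis
      proof
        assume k: "k = 1"
        have "(\<lambda>y. W y $ k) = (\<lambda>y. (M y$2$2 * C y$1 - M y$1$2 * C y$2) / det (M y))"
          using cramer2(1)[OF ndM] k unfolding W_def by auto
        then show ?thesis using ndM by (simp only:) (intro derivative_intros dM dC ddet)
      next
        assume k: "k = 2"
        have "(\<lambda>y. W y $ k) = (\<lambda>y. (M y$1$1 * C y$2 - M y$2$1 * C y$1) / det (M y))"
          using cramer2(2)[OF ndM] k unfolding W_def by auto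
        then show ?thesis using ndM by (simp only:) (intro derivative_intros dM dC ddet)
      qed
    qed
    define Wd where "Wd x = (\<chi> k. vector_derivative (\<lambda>y. W y $ k) (at x))" for x
    have hW: "((\<lambda>y. W y $ k) has_vector_derivative Wd x $ k) (at x)" for k x
      unfolding Wd_def vec_lambda_beta using dW[of k x] vector_derivative_works by blast
    define Ud where "Ud x = (\<chi> i::3. if i = 1 then 0 else - Wd x $ sub3 i)" for x
    have hU: "((\<lambda>y. U y $ i) has_vector_derivative Ud x $ i) (at x)" for i x
    proof (cases "i = 1")
      case True then show ?thesis by (simp add: U_def Ud_def)
    next
      case False then show ?thesis by (simp add: U_def Ud_def) (intro derivative_intros hW)
    qed
    have bl33: "bounded_linear (\<lambda>A::complex^3^3. A $ i $ j)" for i j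
      by (rule bounded_linear_compose[OF bounded_linear_vec_nth bounded_linear_vec_nth])
    have hT: "((\<lambda>y. T y $ i $ j) has_vector_derivative (X x ** T x - T x ** X x) $ i $ j) (at x)" for i j x
      by (rule bounded_linear.has_vector_derivative[OF bl33 lax])
    have deq: "(X x ** T x - T x ** X x) *v U x + T x *v Ud x = \<Omega> *s Ud x" for x
    proof -
      have "((X x ** T x - T x ** X x) *v U x + T x *v Ud x) $ i = (\<Omega> *s Ud x) $ i" for i
      proof -
        have h1: "((\<lambda>y. (T y *v U y) $ i) has_vector_derivative
                 (\<Sum>j\<in>UNIV. T x $ i $ j * Ud x $ j + (X x ** T x - T x ** X x) $ i $ j * U x $ j)) (at x)"
          unfolding matrix_vector_mult_def vec_lambda_beta by (intro derivative_intros hT hU)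
        have h2: "((\<lambda>y. (T y *v U y) $ i) has_vector_derivative \<Omega> * Ud x $ i) (at x)"
          unfolding TU by simp (intro derivative_intros hU)
        have "(\<Sum>j\<in>UNIV. T x $ i $ j * Ud x $ j + (X x ** T x - T x ** X x) $ i $ j * U x $ j) = \<Omega> * Ud x $ i"
          by (rule vector_derivative_unique_at[OF h1 h2])
        then show ?thesis by (simp add: matrix_vector_mult_def sum.distrib add.commute)
      qed
      then show ?thesis by (simp add: vec_eq_iff)
    qed
    define E where "E x = Ud x - X x *v U x" for x
    have TE: "T x *v E x = \<Omega> *s E x" for x
    proof -
      have "X x *v (\<Omega> *s U x) - T x *v (X x *v U x) + T x *v Ud x = \<Omega> *s Ud x"
        using deq[of x] by (simp add: matrix_vector_mult_diff_rdistrib matrix_vector_mul_assoc[symmetric] TU)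
      then have "T x *v Ud x = \<Omega> *s Ud x - \<Omega> *s (X x *v U x) + T x *v (X x *v U x)"
        by (simp add: mulv_smult algebra_simps)
      then show ?thesis
        by (simp add: E_def matrix_vector_mult_diff_distrib vector_ssub_ldistrib)
    qed
    have EU: "E x = (\<i> * complex_of_real \<zeta> + f x) *s U x" for x
    proof -
      have "E x $ 1 = \<i> * complex_of_real \<zeta> + f x"
        by (simp add: E_def Ud_def X_def U_def f_def blockmat_mulv sub3_def sum_2)
      then show ?thesis using kerT[OF TE] by metis
    qed
    define Nr where "Nr x = (\<Sum>i\<in>UNIV. (cmod (U x $ i))^2)" for x
    have Nr_ge: "Nr x \<ge> 1" for x
      by (simp add: Nr_def sum_3 U_def)
    have Nc: "complex_of_real (Nr x) = (\<Sum>i\<in>UNIV. U x $ i * cnj (U x $ i))" for x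
      by (simp add: Nr_def complex_norm_square del: of_real_power)
    define Nd where "Nd x = (\<Sum>i\<in>UNIV. U x $ i * cnj (Ud x $ i) + Ud x $ i * cnj (U x $ i))" for x
    have hNc: "((\<lambda>y. complex_of_real (Nr y)) has_vector_derivative Nd x) (at x)" for x
      unfolding Nc Nd_def
      by (intro derivative_intros hU bounded_linear.has_vector_derivative[OF bounded_linear_cnj])
    have hNr: "(Nr has_real_derivative Re (Nd x)) (at x)" for x
      using bounded_linear.has_vector_derivative[OF bounded_linear_Re hNc[of x]]
      by (simp add: has_real_derivative_iff_has_vector_derivative)
    have Nd_eq: "Re (Nd x) = 2 * Re (f x) * Nr x" for x
    proof -
      have "Re (Nd x) = 2 * Re (\<Sum>i\<in>UNIV. cnj (U x $ i) * Ud x $ i)"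
        by (simp add: Nd_def sum_3 algebra_simps)
      also have "Ud x = X x *v U x + (\<i> * complex_of_real \<zeta> + f x) *s U x"
        using EU[of x] by (simp add: E_def algebra_simps)
      also have "(\<Sum>i\<in>UNIV. cnj (U x $ i) * (X x *v U x + (\<i> * complex_of_real \<zeta> + f x) *s U x) $ i)
          = (\<Sum>i\<in>UNIV. cnj (U x $ i) * (X x *v U x) $ i) + (\<i> * complex_of_real \<zeta> + f x) * complex_of_real (Nr x)"
        by (simp add: Nc distrib_left sum.distrib sum_distrib_left mult.commute mult.left_commute)
           (rule sum.cong; simp add: algebra_simps)
      finally show ?thesis using quad_skew[OF skX, of "U x" x] by simp
    qed
    define g where "g x = ln (Nr x)" for x
    have hg: "(g has_real_derivative 2 * Re (f x)) (at x)" for x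
    proof -
      have "(g has_real_derivative inverse (Nr x) * Re (Nd x)) (at x)"
        unfolding g_def
        by (rule DERIV_chain2[OF DERIV_ln hNr]) (use Nr_ge[of x] in simp)
      moreover have "inverse (Nr x) * (2 * Re (f x) * Nr x) = 2 * Re (f x)"
        using Nr_ge[of x] by (simp add: field_simps)
      ultimately show ?thesis by (simp add: Nd_eq)
    qed
    have qxP: "qx P = qx 0"
    proof -
      have sh: "((\<lambda>y. y + P) has_vector_derivative 1) (at (0::real))"
        using has_real_derivative_iff_has_vector_derivative[of "\<lambda>y. y + P" 1 "at 0"]
        by (auto intro!: derivative_eq_intros)
      have h: "((q \<circ> (\<lambda>y. y + P)) has_vector_derivative (1 *\<^sub>R qx (0 + P))) (at 0)"
        by (rule vector_diff_chain_at[OF sh]) (simp add: qx_def)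
      moreover have "q \<circ> (\<lambda>y. y + P) = q" using q_periodic by (simp add: fun_eq_iff)
      ultimately show ?thesis using vector_derivative_unique_at[OF qx_def[of 0]] by simp
    qed
    have qP: "q P = q 0" using q_periodic[of 0] by simp
    have WP: "W P = W 0" unfolding W_def M_def C_def D_def by (simp only: qP qxP)
    have UP: "U P = U 0" unfolding U_def by (simp only: WP)
    have gP: "g P = g 0" by (simp add: g_def Nr_def UP)
    have ftc: "((\<lambda>x. 2 * Re (f x)) has_integral (g P - g 0)) {0..P}"
    proof (rule fundamental_theorem_of_calculus)
      show "0 \<le> P" using P_pos by simp
      fix x assume "x \<in> {0..P}"
      show "(g has_vector_derivative 2 * Re (f x)) (at x within {0..P})"
        using has_field_derivative_at_within[OF hg[of x], of "{0..P}"]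
        by (simp add: has_real_derivative_iff_has_vector_derivative)
    qed
    have cf: "continuous_on {0..P} f"
      by (rule differentiable_imp_continuous_on, rule differentiable_at_imp_differentiable_on)
         (unfold f_def, rule differentiable_sum, simp, intro ballI differentiable_mult dq dW)
    have fi: "f integrable_on {0..P}" by (rule integrable_continuous_interval[OF cf])
    have "((\<lambda>x. Re (f x)) has_integral Re (integral {0..P} f)) {0..P}"
      by (rule has_integral_Re[OF integrable_integral[OF fi]])
    then have "((\<lambda>x. 2 * Re (f x)) has_integral 2 * Re (integral {0..P} f)) {0..P}"
      by (rule has_integral_mult_right)
    then have "g P - g 0 = 2 * Re (integral {0..P} f)" by (rule has_integral_unique[OF ftc])
    then have "2 * Re (integral {0..P} f) = 0" using gP by simp
    moreover have "(\<lambda>x. \<Sum>j\<in>UNIV. q x $ j * (matrix_inv (D x - mat \<Omega>) *v C x) $ j) = f"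
      by (simp add: fun_eq_iff f_def W_def M_def)
    ultimately show ?thesis by simp
  qed
  show ?thesis using skT part2 part3 by blast
qed

end
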